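(* Let $G=\langle S_k\mid K\rangle$ be a finitely generated semigroup as described in the context with $K$ primitive, $\mathcal{A}$ a finite alphabet, and $X_{\mathbf{A}}$ a hom Markov tree shift on $G$ with $\mathbf{A}=(A,A,\dots,A)$. Let $\mathbf{G}=(\mathbf{V},\mathbf{E})$ be the graph representation of $X_{\mathbf{A}}$. Then (i) $\mathbf{G}$ is strongly connected if and only if $A$ is irreducible; (ii) $\mathbf{G}$ is strongly connected and contains a pivot if and only if $A$ is primitive.
   Context: Let $K$ be a $k\times k$ $\{0,1\}$-matrix indexed by $S_k=\{s_1,\dots,s_k\}$ and $G=\langle S_k\mid K\rangle$ the semigroup generated by $S_k$ with relations $s_is_j=1_G$ iff $K(s_i,s_j)=0$. Every $g\in G$ has a unique minimal representation $g=g_1\cdots g_n$ ($g_l\in S_k$, $K(g_l,g_{l+1})=1$), $|g|=n$. For a $k$-tuple $\mathbf{A}=(A_1,\dots,A_k)$ of $\{0,1\}$-matrices indexed by $\mathcal{A}$, $X_{\mathbf{A}}=\{t\in\mathcal{A}^G: A_i(t_g,t_{gs_i})=1 \text{ for all } g,i \text{ with } |gs_i|=|g|+1\}$; it is a hom Markov tree shift if all $A_i$ equal a single matrix $A$. The graph representation of $X_{\mathbf{A}}$ is the directed graph with vertex set $\mathbf{V}=\mathcal{A}\times S_k$ and edge set $\mathbf{E}=\{((a,s_i),(b,s_j)): K(s_i,s_j)=1,\ A_j(a,b)=1\}$. $\mathbf{G}$ is strongly connected if for all $(a,s_i),(b,s_j)\in\mathbf{V}$ there is a walk (of some positive length) from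 $(a,s_i)$ to $(b,s_j)$. A vertex $(a,s_i)$ is a pivot if there exist $s_j\in S_k$ and $N\in\mathbb{N}$ such that for every $b\in\mathcal{A}$ there is a walk of length exactly $N$ from $(a,s_i)$ to $(b,s_j)$. A nonnegative square matrix is irreducible if for each pair of indices $(i,j)$ some power has positive $(i,j)$ entry, and primitive if some power has all entries positive. *)

theory Defs
  imports Main
begin

definition mat_mult :: "('i::finite \<Rightarrow> 'i \<Rightarrow> nat) \<Rightarrow> ('i \<Rightarrow> 'i \<Rightarrow> nat) \<Rightarrow> 'i \<Rightarrow> 'i \<Rightarrow> nat" where
  "mat_mult M N = (\<lambda>i j. \<Sum>l\<in>UNIV. M i l * N l j)"

fun mat_pow :: "('i::finite \<Rightarrow> 'i \<Rightarrow> nat) \<Rightarrow> nat \<Rightarrow> 'i \<Rightarrow> 'i \<Rightarrow> nat" where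
  "mat_pow M 0 = (\<lambda>i j. if i = j then 1 else 0)"
| "mat_pow M (Suc n) = mat_mult (mat_pow M n) M"

definition nat_of_01 :: "('i \<Rightarrow> 'i \<Rightarrow> bool) \<Rightarrow> 'i \<Rightarrow> 'i \<Rightarrow> nat" where
  "nat_of_01 M = (\<lambda>i j. of_bool (M i j))"

definition irreducible_mat :: "('i::finite \<Rightarrow> 'i \<Rightarrow> nat) \<Rightarrow> bool" where
  "irreducible_mat M \<longleftrightarrow> (\<forall>i j. \<exists>n>0. mat_pow M n i j > 0)"

definition primitive_mat :: "('i::finite \<Rightarrow> 'i \<Rightarrow> nat) \<Rightarrow> bool" where
  "primitive_mat M \<longleftrightarrow> (\<exists>n>0. \<forall>i j. mat_pow M n i j > 0)"

text \<open>Graph representation of the Markov tree shift X_A (A = (A_1,...,A_k)) on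
  the semigroup <S_k | K>: vertices \<A> \<times> S_k, edges ((a,s_i),(b,s_j)) with
  K(s_i,s_j)=1 and A_j(a,b)=1.\<close>
definition graph_edges ::
  "('s \<Rightarrow> 's \<Rightarrow> bool) \<Rightarrow> ('s \<Rightarrow> 'a \<Rightarrow> 'a \<Rightarrow> bool) \<Rightarrow> (('a \<times> 's) \<times> ('a \<times> 's)) set" where
  "graph_edges K As = {((a, si), (b, sj)). K si sj \<and> As sj a b}"

definition strongly_connected :: "('v \<times> 'v) set \<Rightarrow> bool" where
  "strongly_connected E \<longleftrightarrow> (\<forall>v w. \<exists>n>0. (v, w) \<in> E ^^ n)"

definition is_pivot :: "(('a \<times> 's) \<times> ('a \<times> 's)) set \<Rightarrow> 'a \<times> 's \<Rightarrow> bool" where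
  "is_pivot E v \<longleftrightarrow> (\<exists>sj N. \<forall>b. (v, (b, sj)) \<in> E ^^ N)"

end

theory Submission
  imports Defs
begin

lemma matpow_rel:
  fixes M :: "'i::finite \<Rightarrow> 'i \<Rightarrow> bool"
  shows "(mat_pow (nat_of_01 M) n i j > 0) \<longleftrightarrow> (i,j) \<in> {(x,y). M x y} ^^ n"
proof (induction n arbitrary: j)
  case 0
  then show ?case by auto
next
  case (Suc n)
  have e: "mat_pow (nat_of_01 M) (Suc n) i j = (\<Sum>l\<in>UNIV. mat_pow (nat_of_01 M) n i l * nat_of_01 M l j)"
    by (simp add: mat_mult_def)
  have "(mat_pow (nat_of_01 M) (Suc n) i j > 0) \<longleftrightarrow>
        (\<exists>l. mat_pow (nat_of_01 M) n i l * nat_of_01 M l j \<noteq> 0)"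
    unfolding e zero_less_iff_neq_zero by (simp add: sum_eq_0_iff del: mult_eq_0_iff)
  also have "\<dots> \<longleftrightarrow> (\<exists>l. mat_pow (nat_of_01 M) n i l > 0 \<and> M l j)"
    by (simp add: nat_of_01_def)
  also have "\<dots> \<longleftrightarrow> (i,j) \<in> {(x,y). M x y} ^^ Suc n"
    using Suc by (auto simp: relpow.simps(2))
  finally show ?case .
qed

lemma prod_rel:
  "(((a,s),(b,t)) \<in> graph_edges K (\<lambda>_. A) ^^ n) \<longleftrightarrow>
     (a,b) \<in> {(x,y). A x y} ^^ n \<and> (s,t) \<in> {(x,y). K x y} ^^ n"
proof (induction n arbitrary: b t)
  case 0
  then show ?case by auto
next
  case (Suc n)
  have "(((a,s),(b,t)) \<in> graph_edges K (\<lambda>_. A) ^^ Suc n) \<longleftrightarrow>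
     (\<exists>c u. ((a,s),(c,u)) \<in> graph_edges K (\<lambda>_. A) ^^ n \<and> K u t \<and> A c b)"
    by (auto simp add: graph_edges_def)
  also have "\<dots> \<longleftrightarrow> (\<exists>c u. ((a,c) \<in> {(x,y). A x y} ^^ n \<and> (s,u) \<in> {(x,y). K x y} ^^ n) \<and> K u t \<and> A c b)"
    using Suc.IH by simp
  also have "\<dots> \<longleftrightarrow> (a,b) \<in> {(x,y). A x y} ^^ Suc n \<and> (s,t) \<in> {(x,y). K x y} ^^ Suc n"
    by auto
  finally show ?case .
qed

lemma loop_pow:
  assumes "(a,a) \<in> R ^^ p"
  shows "(a,a) \<in> R ^^ (m*p)"
proof (induction m)
  case 0 then show ?case by simp
next
  case (Suc m)
  then have "(a,a) \<in> R ^^ p O R ^^ (m*p)" using assms by blast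
  then show ?case by (simp add: relpow_add)
qed

lemma row_full_mono:
  fixes R :: "('a \<times> 'a) set"
  assumes full: "\<forall>y. (x,y) \<in> R ^^ N"
    and pred: "\<forall>b. \<exists>c. (c,b) \<in> R"
    and "N \<le> m"
  shows "\<forall>y. (x,y) \<in> R ^^ m"
  using assms(3)
proof (induction m rule: dec_induct)
  case base then show ?case using full by simp
next
  case (step m)
  show ?case
  proof
    fix y
    obtain c where "(c,y) \<in> R" using pred by blast
    with step.IH show "(x,y) \<in> R ^^ Suc m" by (auto simp: relpow.simps(2))
  qed
qed

lemma pred_of_full:
  fixes R :: "('a \<times> 'a) set"
  assumes "\<forall>x y. (x,y) \<in> R ^^ N" "N > 0"
  shows "\<forall>b. \<exists>c. (c,b) \<in> R"
proof
  fix b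
  obtain N' where N: "N = Suc N'" using assms(2) by (cases N) auto
  have "(b,b) \<in> R ^^ N' O R" using assms(1) N by (simp add: relpow.simps(2))
  then show "\<exists>c. (c,b) \<in> R" by blast
qed

lemma pred_of_irr:
  fixes R :: "('a \<times> 'a) set"
  assumes "\<forall>i j. \<exists>n>0. (i,j) \<in> R ^^ n"
  shows "\<forall>b. \<exists>c. (c,b) \<in> R"
proof
  fix b
  obtain n where n: "n>0" "(b,b) \<in> R ^^ n" using assms by blast
  obtain n' where N: "n = Suc n'" using n(1) by (cases n) auto
  have "(b,b) \<in> R ^^ n' O R" using n(2) N by (simp add: relpow.simps(2))
  then show "\<exists>c. (c,b) \<in> R" by blast
qed

lemma all_full_mono:
  fixes R :: "('a \<times> 'a) set"
  assumes "\<forall>x y. (x,y) \<in> R ^^ N" "N > 0" "N \<le> m"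
  shows "\<forall>x y. (x,y) \<in> R ^^ m"
  using row_full_mono[OF _ pred_of_full[OF assms(1,2)] assms(3)] assms(1) by blast

theorem proposition5p3:
  fixes K :: "'s::finite \<Rightarrow> 's \<Rightarrow> bool"
    and A :: "'a::finite \<Rightarrow> 'a \<Rightarrow> bool"
  assumes "primitive_mat (nat_of_01 K)"
  shows "(strongly_connected (graph_edges K (\<lambda>_. A)) \<longleftrightarrow> irreducible_mat (nat_of_01 A))
       \<and> ((strongly_connected (graph_edges K (\<lambda>_. A)) \<and> (\<exists>v. is_pivot (graph_edges K (\<lambda>_. A)) v))
            \<longleftrightarrow> primitive_mat (nat_of_01 A))"
proof -
  define RA where "RA = {(x,y). A x y}"
  define RK where "RK = {(x,y). K x y}"
  define E where "E = graph_edges K (\<lambda>_. A)"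
  have irrA: "irreducible_mat (nat_of_01 A) \<longleftrightarrow> (\<forall>i j. \<exists>n>0. (i,j) \<in> RA ^^ n)"
    unfolding irreducible_mat_def RA_def matpow_rel ..
  have primA: "primitive_mat (nat_of_01 A) \<longleftrightarrow> (\<exists>n>0. \<forall>i j. (i,j) \<in> RA ^^ n)"
    unfolding primitive_mat_def RA_def matpow_rel ..
  obtain NK where NK: "NK > 0" "\<forall>i j. (i,j) \<in> RK ^^ NK"
    using assms unfolding primitive_mat_def RK_def matpow_rel by blast
  have Kfull: "\<And>m. NK \<le> m \<Longrightarrow> \<forall>i j. (i,j) \<in> RK ^^ m"
    using all_full_mono[OF NK(2) NK(1)] by blast
  have Erel: "\<And>a s b t n. (((a,s),(b,t)) \<in> E ^^ n) \<longleftrightarrow> (a,b) \<in> RA ^^ n \<and> (s,t) \<in> RK ^^ n"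
    unfolding E_def RA_def RK_def by (rule prod_rel)
  have I: "strongly_connected E \<longleftrightarrow> (\<forall>i j. \<exists>n>0. (i,j) \<in> RA ^^ n)"
  proof
    assume sc: "strongly_connected E"
    show "\<forall>i j. \<exists>n>0. (i,j) \<in> RA ^^ n"
    proof (intro allI)
      fix i j
      obtain s0 :: 's where True by simp
      from sc obtain n where "n>0" "((i,s0),(j,s0)) \<in> E ^^ n"
        unfolding strongly_connected_def by blast
      then show "\<exists>n>0. (i,j) \<in> RA ^^ n" using Erel by blast
    qed
  next
    assume irr: "\<forall>i j. \<exists>n>0. (i,j) \<in> RA ^^ n"
    show "strongly_connected E"
      unfolding strongly_connected_def
    proof (intro allI)
      fix v w :: "'a \<times> 's"
      obtain a s b t where vw: "v = (a,s)" "w = (b,t)" by (cases v, cases w) auto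
      obtain p where p: "p>0" "(a,a) \<in> RA ^^ p" using irr by blast
      obtain n0 where n0: "n0>0" "(a,b) \<in> RA ^^ n0" using irr by blast
      define n where "n = NK*p + n0"
      have "(a,b) \<in> RA ^^ n"
        using loop_pow[OF p(2), of NK] n0(2) unfolding n_def relpow_add by blast
      moreover have "NK * 1 \<le> NK * p" using p(1) by (intro mult_le_mono2) simp
      then have "NK \<le> n" unfolding n_def by (metis nat_mult_1_right le_add1 le_trans)
      then have "(s,t) \<in> RK ^^ n" using Kfull by blast
      moreover have "n > 0" unfolding n_def using n0 by simp
      ultimately show "\<exists>n>0. (v,w) \<in> E ^^ n" using Erel vw by blast
    qed
  qed
  have II: "(strongly_connected E \<and> (\<exists>v. is_pivot E v)) \<longleftrightarrow> (\<exists>n>0. \<forall>i j. (i,j) \<in> RA ^^ n)"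
  proof
    assume h: "strongly_connected E \<and> (\<exists>v. is_pivot E v)"
    then have irr: "\<forall>i j. \<exists>n>0. (i,j) \<in> RA ^^ n" using I by blast
    have predA: "\<forall>b. \<exists>c. (c,b) \<in> RA" using pred_of_irr[OF irr] .
    from h obtain a si sj N where piv: "\<forall>b. ((a,si),(b,sj)) \<in> E ^^ N"
      unfolding is_pivot_def by fastforce
    have rowa: "\<forall>b. (a,b) \<in> RA ^^ N" using piv Erel by blast
    have ex: "\<forall>c. \<exists>p. p > 0 \<and> (c,a) \<in> RA ^^ p" using irr by blast
    obtain pf where pf0: "\<forall>c. pf c > 0 \<and> (c,a) \<in> RA ^^ pf c"
      using choice[OF ex] by blast
    have pf: "\<And>c. pf c > 0 \<and> (c,a) \<in> RA ^^ pf c" using pf0 by blast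
    define P where "P = Max (range pf)"
    have Pge: "\<And>c. pf c \<le> P" unfolding P_def by simp
    define M where "M = P + N"
    have "\<forall>i j. (i,j) \<in> RA ^^ M"
    proof (intro allI)
      fix c j
      have "\<forall>y. (c,y) \<in> RA ^^ (pf c + N)"
        using pf[of c] rowa unfolding relpow_add by blast
      then have "\<forall>y. (c,y) \<in> RA ^^ M"
        by (rule row_full_mono[OF _ predA]) (use Pge[of c] M_def in simp)
      then show "(c,j) \<in> RA ^^ M" by blast
    qed
    moreover have "M > 0" using pf[of a] Pge[of a] unfolding M_def by simp
    ultimately show "\<exists>n>0. \<forall>i j. (i,j) \<in> RA ^^ n" by blast
  next
    assume "\<exists>n>0. \<forall>i j. (i,j) \<in> RA ^^ n"
    then obtain NA where NA: "NA>0" "\<forall>i j. (i,j) \<in> RA ^^ NA" by blast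
    have irr: "\<forall>i j. \<exists>n>0. (i,j) \<in> RA ^^ n" using NA by blast
    define M where "M = NA + NK"
    have fA: "\<forall>i j. (i,j) \<in> RA ^^ M" using all_full_mono[OF NA(2) NA(1)] M_def by simp
    have fK: "\<forall>i j. (i,j) \<in> RK ^^ M" using Kfull M_def by simp
    obtain a :: 'a and s :: 's where True by simp
    have "is_pivot E (a,s)" unfolding is_pivot_def using fA fK Erel by blast
    then show "strongly_connected E \<and> (\<exists>v. is_pivot E v)" using I irr by blast
  qed
  show ?thesis using I II irrA primA E_def by simp
qed

end
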